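(* Let $\mathcal F$ be the family of all graphs on fewer than $25$ vertices with density $e(F)/v(F)>10/7$, and let $G$ be a $(K_3,1)$-stable graph that contains no member of $\mathcal F$ as a subgraph. Then every connected component of $G$ is isomorphic either to $TT$ or to $DD$.
   Context: With respect to a graph $G$: a bad vertex (bad edge) is a vertex (edge) of $G$ lying in no triangle of $G$; a bad pair is a set $\{u,v\}\subseteq V(G)$ of two vertices such that no triangle of $G$ contains exactly one of $u,v$; a small component is a connected component with at most $4$ vertices. $G$ is $(K_3,1)$-stable if it has no bad vertex, no bad edge, no bad pair and no small component. $TT$ is the graph on $v_1,\dots,v_5$ with edges $v_1v_2,v_1v_3,v_2v_3,v_2v_4,v_3v_4,v_3v_5,v_4v_5$. $DD$ is the graph on $x,y_1,z_1,z_2,y_2,z_3,z_4$ with edges $xy_1,xz_1,xz_2,y_1z_1,y_1z_2,xy_2,xz_3,xz_4,y_2z_3,y_2z_4$. *)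

theory Defs
  imports Complex_Main
begin

definition graph :: "'a set \<Rightarrow> 'a set set \<Rightarrow> bool" where
  "graph V E \<longleftrightarrow> finite V \<and> (\<forall>e\<in>E. \<exists>u v. e = {u, v} \<and> u \<noteq> v \<and> u \<in> V \<and> v \<in> V)"

definition triangle :: "'a set set \<Rightarrow> 'a set \<Rightarrow> bool" where
  "triangle E T \<longleftrightarrow> (\<exists>a b c. T = {a, b, c} \<and> a \<noteq> b \<and> a \<noteq> c \<and> b \<noteq> c
      \<and> {a, b} \<in> E \<and> {a, c} \<in> E \<and> {b, c} \<in> E)"

definition bad_vertex :: "'a set \<Rightarrow> 'a set set \<Rightarrow> 'a \<Rightarrow> bool" where
  "bad_vertex V E v \<longleftrightarrow> v \<in> V \<and> \<not> (\<exists>T. triangle E T \<and> v \<in> T)"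

definition bad_edge :: "'a set set \<Rightarrow> 'a set \<Rightarrow> bool" where
  "bad_edge E e \<longleftrightarrow> e \<in> E \<and> \<not> (\<exists>T. triangle E T \<and> e \<subseteq> T)"

definition bad_pair :: "'a set \<Rightarrow> 'a set set \<Rightarrow> 'a \<Rightarrow> 'a \<Rightarrow> bool" where
  "bad_pair V E u v \<longleftrightarrow> u \<in> V \<and> v \<in> V \<and> u \<noteq> v \<and>
     \<not> (\<exists>T. triangle E T \<and> ((u \<in> T \<and> v \<notin> T) \<or> (v \<in> T \<and> u \<notin> T)))"

definition adj :: "'a set set \<Rightarrow> 'a \<Rightarrow> 'a \<Rightarrow> bool" where
  "adj E u v \<longleftrightarrow> {u, v} \<in> E"

definition component_of :: "'a set \<Rightarrow> 'a set set \<Rightarrow> 'a \<Rightarrow> 'a set" where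
  "component_of V E v = {w \<in> V. (adj E)\<^sup>*\<^sup>* v w}"

definition components :: "'a set \<Rightarrow> 'a set set \<Rightarrow> 'a set set" where
  "components V E = component_of V E ` V"

definition small_component :: "'a set \<Rightarrow> 'a set set \<Rightarrow> 'a set \<Rightarrow> bool" where
  "small_component V E C \<longleftrightarrow> C \<in> components V E \<and> card C \<le> 4"

definition K3_1_stable :: "'a set \<Rightarrow> 'a set set \<Rightarrow> bool" where
  "K3_1_stable V E \<longleftrightarrow>
     (\<forall>v. \<not> bad_vertex V E v) \<and> (\<forall>e. \<not> bad_edge E e) \<and>
     (\<forall>u v. \<not> bad_pair V E u v) \<and> (\<forall>C. \<not> small_component V E C)"

definition induced_edges :: "'a set set \<Rightarrow> 'a set \<Rightarrow> 'a set set" where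
  "induced_edges E S = {e \<in> E. e \<subseteq> S}"

definition isomorphic :: "'a set \<Rightarrow> 'a set set \<Rightarrow> 'b set \<Rightarrow> 'b set set \<Rightarrow> bool" where
  "isomorphic V1 E1 V2 E2 \<longleftrightarrow> (\<exists>f. bij_betw f V1 V2 \<and>
     (\<forall>u\<in>V1. \<forall>v\<in>V1. {u, v} \<in> E1 \<longleftrightarrow> {f u, f v} \<in> E2))"

definition contains_subgraph :: "'b set \<Rightarrow> 'b set set \<Rightarrow> 'a set \<Rightarrow> 'a set set \<Rightarrow> bool" where
  "contains_subgraph FV FE V E \<longleftrightarrow> (\<exists>f. inj_on f FV \<and> f ` FV \<subseteq> V \<and> (\<forall>e\<in>FE. f ` e \<in> E))"

text \<open>TT on v1..v5 (vertices 1..5).\<close>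
definition TT_V :: "nat set" where "TT_V = {1, 2, 3, 4, 5}"
definition TT_E :: "nat set set" where
  "TT_E = {{1,2}, {1,3}, {2,3}, {2,4}, {3,4}, {3,5}, {4,5}}"

text \<open>DD on x=0, y1=1, z1=2, z2=3, y2=4, z3=5, z4=6.\<close>
definition DD_V :: "nat set" where "DD_V = {0, 1, 2, 3, 4, 5, 6}"
definition DD_E :: "nat set set" where
  "DD_E = {{0,1}, {0,2}, {0,3}, {1,2}, {1,3}, {0,4}, {0,5}, {0,6}, {4,5}, {4,6}}"

end

theory Submission
  imports Defs
begin

lemma graph_edge:
  assumes "graph V E" "{u,v} \<in> E" shows "u \<noteq> v \<and> u \<in> V \<and> v \<in> V"
proof -
  obtain a b where "{u,v} = {a,b}" "a \<noteq> b" "a \<in> V" "b \<in> V"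
    using assms unfolding graph_def by blast
  then show ?thesis by (auto simp: doubleton_eq_iff)
qed

lemma IE_empty_card: assumes "graph V E" shows "induced_edges E {} = {}"
  using assms unfolding induced_edges_def graph_def by auto

lemma sparse:
  assumes G: "graph V E"
    and H: "\<forall>(FV :: nat set) (FE :: nat set set).
           graph FV FE \<and> card FV < 25 \<and> real (card FE) / real (card FV) > (10::real) / 7
           \<longrightarrow> \<not> contains_subgraph FV FE V E"
    and S: "S \<subseteq> V" "card S < 25"
  shows "7 * card (induced_edges E S) \<le> 10 * card S"
proof -
  have fS: "finite S" using G S unfolding graph_def by (meson finite_subset)
  obtain f where bij: "bij_betw f S {0..<card S}" using ex_bij_betw_finite_nat[OF fS] by blast
  have inj: "inj_on f S" using bij bij_betw_def by blast
  define FV where "FV = {0..<card S}"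
  define FE where "FE = (\<lambda>e. f ` e) ` induced_edges E S"
  have IEsub: "\<And>e. e \<in> induced_edges E S \<Longrightarrow> e \<subseteq> S \<and> e \<in> E"
    unfolding induced_edges_def by auto
  have gF: "graph FV FE"
    unfolding graph_def
  proof
    show "finite FV" unfolding FV_def by simp
    show "\<forall>e\<in>FE. \<exists>u v. e = {u, v} \<and> u \<noteq> v \<and> u \<in> FV \<and> v \<in> FV"
    proof
      fix e' assume "e' \<in> FE"
      then obtain e where e: "e \<in> induced_edges E S" "e' = f ` e" unfolding FE_def by blast
      then have "e \<subseteq> S" "e \<in> E" using IEsub by auto
      then obtain u v where uv: "e = {u,v}" "u \<noteq> v" using G unfolding graph_def by blast
      then have "u \<in> S" "v \<in> S" using \<open>e \<subseteq> S\<close> by auto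
      then have "f u \<noteq> f v" using inj uv(2) by (meson inj_on_contraD)
      moreover have "f u \<in> FV" "f v \<in> FV" using bij \<open>u \<in> S\<close> \<open>v \<in> S\<close> unfolding FV_def
        using bij_betwE by blast+
      ultimately have "f u \<noteq> f v" "f u \<in> FV" "f v \<in> FV" by auto
      then show "\<exists>u v. e' = {u, v} \<and> u \<noteq> v \<and> u \<in> FV \<and> v \<in> FV"
        using e uv by auto
    qed
  qed
  have cardFE: "card FE = card (induced_edges E S)"
    unfolding FE_def
  proof (rule card_image)
    show "inj_on ((`) f) (induced_edges E S)"
    proof (rule inj_onI)
      fix x y assume xy: "x \<in> induced_edges E S" "y \<in> induced_edges E S" "f ` x = f ` y"
      have "x = inv_into S f ` f ` x" using inv_into_image_cancel[OF inj] IEsub[OF xy(1)] by simp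
      also have "\<dots> = inv_into S f ` f ` y" using xy(3) by simp
      also have "\<dots> = y" using inv_into_image_cancel[OF inj] IEsub[OF xy(2)] by simp
      finally show "x = y" .
    qed
  qed
  have cont: "contains_subgraph FV FE V E"
    unfolding contains_subgraph_def
  proof (intro exI conjI)
    let ?g = "inv_into S f"
    show "inj_on ?g FV" unfolding FV_def using bij bij_betw_imp_inj_on bij_betw_inv_into by blast
    have "f ` S = {0..<card S}" using bij by (simp add: bij_betw_def)
    then have "?g ` FV = S" unfolding FV_def using inv_into_image_cancel[OF inj, of S] by simp
    then show "?g ` FV \<subseteq> V" using S by simp
    show "\<forall>e\<in>FE. ?g ` e \<in> E"
    proof
      fix e' assume "e' \<in> FE"
      then obtain e where e: "e \<in> induced_edges E S" "e' = f ` e" unfolding FE_def by blast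
      then have "?g ` e' = e" using inv_into_image_cancel[OF inj] IEsub[OF e(1)] by simp
      then show "?g ` e' \<in> E" using IEsub[OF e(1)] by simp
    qed
  qed
  have "card FV < 25" using S unfolding FV_def by simp
  with H gF cont have nd: "\<not> real (card FE) / real (card FV) > (10::real) / 7" by blast
  show ?thesis
  proof (cases "card S = 0")
    case True
    then have "S = {}" using fS by simp
    then show ?thesis using IE_empty_card[OF G] by simp
  next
    case False
    then have "real (card FV) > 0" unfolding FV_def by simp
    with nd have "real (card FE) \<le> 10/7 * real (card FV)" by (simp add: field_simps)
    then have "7 * real (card FE) \<le> 10 * real (card FV)" by simp
    then have "7 * card FE \<le> 10 * card FV" by linarith
    then show ?thesis using cardFE unfolding FV_def by simp
  qed
qed


definition tri :: "'a set set \<Rightarrow> 'a \<Rightarrow> 'a \<Rightarrow> 'a \<Rightarrow> bool" where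
  "tri E a b c \<longleftrightarrow> a \<noteq> b \<and> a \<noteq> c \<and> b \<noteq> c \<and> {a,b} \<in> E \<and> {a,c} \<in> E \<and> {b,c} \<in> E"

lemma tri_perm: "tri E a b c \<Longrightarrow> tri E b a c" "tri E a b c \<Longrightarrow> tri E a c b"
  "tri E a b c \<Longrightarrow> tri E c a b" "tri E a b c \<Longrightarrow> tri E b c a" "tri E a b c \<Longrightarrow> tri E c b a"
  unfolding tri_def by (auto simp: insert_commute)

lemma tri_pair: assumes "tri E a b c" "x \<in> {a,b,c}" "y \<in> {a,b,c}" "x \<noteq> y"
  shows "\<exists>z. tri E x y z \<and> z \<in> {a,b,c}"
proof -
  consider "x=a" "y=b" | "x=a" "y=c" | "x=b" "y=a" | "x=b" "y=c" | "x=c" "y=a" | "x=c" "y=b"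
    using assms(2-4) by auto
  then show ?thesis
  proof cases
    case 1 then show ?thesis using assms(1) by blast
  next
    case 2 then show ?thesis using tri_perm(2)[OF assms(1)] by blast
  next
    case 3 then show ?thesis using tri_perm(1)[OF assms(1)] by blast
  next
    case 4 then show ?thesis using tri_perm(4)[OF assms(1)] by blast
  next
    case 5 then show ?thesis using tri_perm(3)[OF assms(1)] by blast
  next
    case 6 then show ?thesis using tri_perm(5)[OF assms(1)] by blast
  qed
qed

lemma tri_one: assumes "tri E a b c" "x \<in> {a,b,c}" shows "\<exists>y z. tri E x y z \<and> y \<in> {a,b,c} \<and> z \<in> {a,b,c}"
proof -
  have "a \<noteq> b" "a \<noteq> c" "b \<noteq> c" using assms(1) unfolding tri_def by auto
  then obtain y where "y \<in> {a,b,c}" "x \<noteq> y" using assms(2) by auto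
  then show ?thesis using tri_pair[OF assms(1,2)] by blast
qed

lemma triangle_tri: "triangle E T \<longleftrightarrow> (\<exists>a b c. T = {a,b,c} \<and> tri E a b c)"
  unfolding triangle_def tri_def by blast

lemma st_bv: "K3_1_stable V E \<Longrightarrow> \<not> bad_vertex V E v" by (simp add: K3_1_stable_def)
lemma st_be: "K3_1_stable V E \<Longrightarrow> \<not> bad_edge E e" by (simp add: K3_1_stable_def)
lemma st_bp: "K3_1_stable V E \<Longrightarrow> \<not> bad_pair V E u v" by (simp add: K3_1_stable_def)
lemma st_sc: "K3_1_stable V E \<Longrightarrow> \<not> small_component V E C" by (simp add: K3_1_stable_def)

lemma vertex_tri:
  assumes "K3_1_stable V E" "v \<in> V" shows "\<exists>a b. tri E v a b"
proof -
  obtain T where "triangle E T" "v \<in> T"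
    using st_bv[OF assms(1), of v] assms(2) unfolding bad_vertex_def by blast
  then obtain a b c where T: "T = {a,b,c}" "tri E a b c" unfolding triangle_tri by blast
  then have "v \<in> {a,b,c}" using \<open>v \<in> T\<close> by simp
  from tri_one[OF T(2) this] show ?thesis by blast
qed

lemma edge_tri:
  assumes "graph V E" "K3_1_stable V E" "{x,y} \<in> E" shows "\<exists>z. tri E x y z"
proof -
  obtain T where "triangle E T" "{x,y} \<subseteq> T"
    using st_be[OF assms(2), of "{x,y}"] assms(3) unfolding bad_edge_def by blast
  then obtain a b c where T: "T = {a,b,c}" "tri E a b c" unfolding triangle_tri by blast
  have "x \<noteq> y" using graph_edge[OF assms(1,3)] by simp
  moreover have "x \<in> {a,b,c}" "y \<in> {a,b,c}" using T(1) \<open>{x,y} \<subseteq> T\<close> by auto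
  ultimately show ?thesis using tri_pair[OF T(2)] by blast
qed

lemma tri_edges: "tri E a b c \<Longrightarrow> {a,b} \<in> E \<and> {b,a} \<in> E \<and> {a,c} \<in> E \<and> {c,a} \<in> E \<and> {b,c} \<in> E \<and> {c,b} \<in> E"
  unfolding tri_def by (auto simp: insert_commute)

lemma no_bad_pair:
  assumes "K3_1_stable V E" "y \<in> V" "z \<in> V" "y \<noteq> z"
    and Hy: "\<And>a b. tri E y a b \<Longrightarrow> z = a \<or> z = b"
    and Hz: "\<And>a b. tri E z a b \<Longrightarrow> y = a \<or> y = b"
  shows False
proof -
  obtain T where T: "triangle E T" "(y \<in> T \<and> z \<notin> T) \<or> (z \<in> T \<and> y \<notin> T)"
    using st_bp[OF assms(1), of y z] assms(2-4) unfolding bad_pair_def by blast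
  then obtain a b c where abc: "T = {a,b,c}" "tri E a b c" unfolding triangle_tri by blast
  show False
  proof (cases "y \<in> T \<and> z \<notin> T")
    case True
    then have "y \<in> {a,b,c}" using abc(1) by simp
    then obtain p q where "tri E y p q" "p \<in> {a,b,c}" "q \<in> {a,b,c}" using tri_one[OF abc(2)] by blast
    then have "z = p \<or> z = q" using Hy by blast
    then show False using True abc(1) \<open>p \<in> {a,b,c}\<close> \<open>q \<in> {a,b,c}\<close> by auto
  next
    case False
    then have "z \<in> T" "y \<notin> T" using T by auto
    then have "z \<in> {a,b,c}" using abc(1) by simp
    then obtain p q where "tri E z p q" "p \<in> {a,b,c}" "q \<in> {a,b,c}" using tri_one[OF abc(2)] by blast
    then have "y = p \<or> y = q" using Hz by blast
    then show False using \<open>y \<notin> T\<close> abc(1) \<open>p \<in> {a,b,c}\<close> \<open>q \<in> {a,b,c}\<close> by auto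
  qed
qed

lemma adj_sym: "adj E a b \<Longrightarrow> adj E b a"
  unfolding adj_def by (simp add: insert_commute)

lemma rtr_sym: "(adj E)\<^sup>*\<^sup>* a b \<Longrightarrow> (adj E)\<^sup>*\<^sup>* b a"
proof (induction rule: rtranclp_induct)
  case base then show ?case by simp
next
  case (step y z)
  then show ?case using converse_rtranclp_into_rtranclp[OF adj_sym[OF step(2)] step(3)] by simp
qed

lemma comp_props:
  assumes G: "graph V E" and St: "K3_1_stable V E" and C: "C \<in> components V E"
  shows "C \<subseteq> V" "finite C" "5 \<le> card C"
    "\<And>a b. a \<in> C \<Longrightarrow> {a,b} \<in> E \<Longrightarrow> b \<in> C"
    "\<And>a b. a \<in> C \<Longrightarrow> b \<in> C \<Longrightarrow> (adj E)\<^sup>*\<^sup>* a b"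
proof -
  obtain v0 where v0: "v0 \<in> V" "C = component_of V E v0" using C unfolding components_def by blast
  show CV: "C \<subseteq> V" using v0 unfolding component_of_def by auto
  show fC: "finite C" using CV G unfolding graph_def using finite_subset by blast
  have "\<not> small_component V E C" using st_sc[OF St] by blast
  then show "5 \<le> card C" using C unfolding small_component_def by auto
  show "\<And>a b. a \<in> C \<Longrightarrow> {a,b} \<in> E \<Longrightarrow> b \<in> C"
  proof -
    fix a b assume "a \<in> C" "{a,b} \<in> E"
    then have "(adj E)\<^sup>*\<^sup>* v0 a" "adj E a b" "b \<in> V" using v0 graph_edge[OF G] unfolding component_of_def adj_def
      by auto
    then show "b \<in> C" using v0 unfolding component_of_def by (auto intro: rtranclp.rtrancl_into_rtrancl)
  qed
  show "\<And>a b. a \<in> C \<Longrightarrow> b \<in> C \<Longrightarrow> (adj E)\<^sup>*\<^sup>* a b"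
  proof -
    fix a b assume "a \<in> C" "b \<in> C"
    then have "(adj E)\<^sup>*\<^sup>* v0 a" "(adj E)\<^sup>*\<^sup>* v0 b" using v0 unfolding component_of_def by auto
    then show "(adj E)\<^sup>*\<^sup>* a b" using rtranclp_trans[OF rtr_sym] by metis
  qed
qed

lemma crossing:
  assumes "(adj E)\<^sup>*\<^sup>* a b" "a \<in> S" "b \<notin> S"
  shows "\<exists>x y. x \<in> S \<and> y \<notin> S \<and> {x,y} \<in> E"
  using assms
proof (induction rule: rtranclp_induct)
  case base then show ?case by simp
next
  case (step y z)
  show ?case
  proof (cases "y \<in> S")
    case True
    then show ?thesis using step(2,5) unfolding adj_def by blast
  next
    case False
    then show ?thesis using step(3,4) by blast
  qed
qed


inductive built :: "'a set set \<Rightarrow> 'a set \<Rightarrow> 'a set \<Rightarrow> nat \<Rightarrow> nat \<Rightarrow> bool" for E C where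
  base: "tri E t1 t2 t3 \<Longrightarrow> t1 \<in> C \<Longrightarrow> t2 \<in> C \<Longrightarrow> t3 \<in> C \<Longrightarrow> built E C {t1,t2,t3} 0 0"
| stA: "built E C S a b \<Longrightarrow> v \<in> C \<Longrightarrow> v \<notin> S \<Longrightarrow> p \<in> S \<Longrightarrow> q \<in> S \<Longrightarrow> p \<noteq> q \<Longrightarrow>
        {v,p} \<in> E \<Longrightarrow> {v,q} \<in> E \<Longrightarrow> built E C (insert v S) (Suc a) b"
| stB: "built E C S a b \<Longrightarrow> (\<forall>v\<in>C. v \<notin> S \<longrightarrow> (\<forall>p\<in>S. \<forall>q\<in>S. {v,p} \<in> E \<longrightarrow> {v,q} \<in> E \<longrightarrow> p = q)) \<Longrightarrow>
        x \<in> S \<Longrightarrow> y \<in> C \<Longrightarrow> z \<in> C \<Longrightarrow> y \<notin> S \<Longrightarrow> z \<notin> S \<Longrightarrow> tri E x y z \<Longrightarrow>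
        built E C (insert y (insert z S)) a (Suc b)"

lemma IE_mono: "S \<subseteq> S' \<Longrightarrow> induced_edges E S \<subseteq> induced_edges E S'"
  unfolding induced_edges_def by auto

lemma IE_fin: "finite S \<Longrightarrow> finite (induced_edges E S)"
  by (rule finite_subset[of _ "Pow S"]) (auto simp: induced_edges_def)

lemma IE_mem: "{u,v} \<in> induced_edges E S \<longleftrightarrow> {u,v} \<in> E \<and> u \<in> S \<and> v \<in> S"
  unfolding induced_edges_def by auto

lemma card2: "p \<noteq> q \<Longrightarrow> card {{v,p},{v,q}} = (2::nat)"
  by (auto simp: doubleton_eq_iff)

lemma IE_A:
  assumes "finite S" "v \<notin> S" "p \<in> S" "q \<in> S" "p \<noteq> q" "{v,p} \<in> E" "{v,q} \<in> E"
  shows "induced_edges E S \<union> {{v,p},{v,q}} \<subseteq> induced_edges E (insert v S)"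
    "card (induced_edges E S \<union> {{v,p},{v,q}}) = card (induced_edges E S) + 2"
    "card (induced_edges E S) + 2 \<le> card (induced_edges E (insert v S))"
proof -
  show s: "induced_edges E S \<union> {{v,p},{v,q}} \<subseteq> induced_edges E (insert v S)"
    using assms IE_mono[of S "insert v S" E] by (auto simp: IE_mem)
  have d: "induced_edges E S \<inter> {{v,p},{v,q}} = {}" using assms(2) unfolding induced_edges_def by auto
  show c: "card (induced_edges E S \<union> {{v,p},{v,q}}) = card (induced_edges E S) + 2"
    using card_Un_disjoint[OF IE_fin[OF assms(1)] _ d] card2[OF assms(5)] by simp
  show "card (induced_edges E S) + 2 \<le> card (induced_edges E (insert v S))"
    using card_mono[OF IE_fin[of "insert v S"] s] c assms(1) by simp
qed

lemma card3: "x \<noteq> y \<Longrightarrow> x \<noteq> z \<Longrightarrow> y \<noteq> z \<Longrightarrow> card {{x,y},{x,z},{y,z}} = (3::nat)"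
  by (auto simp: doubleton_eq_iff)

lemma IE_B:
  assumes "finite S" "x \<in> S" "y \<notin> S" "z \<notin> S" "tri E x y z"
  shows "induced_edges E S \<union> {{x,y},{x,z},{y,z}} \<subseteq> induced_edges E (insert y (insert z S))"
    "card (induced_edges E S \<union> {{x,y},{x,z},{y,z}}) = card (induced_edges E S) + 3"
    "card (induced_edges E S) + 3 \<le> card (induced_edges E (insert y (insert z S)))"
proof -
  show s: "induced_edges E S \<union> {{x,y},{x,z},{y,z}} \<subseteq> induced_edges E (insert y (insert z S))"
    using assms IE_mono[of S "insert y (insert z S)" E] by (auto simp: IE_mem tri_def)
  have d: "induced_edges E S \<inter> {{x,y},{x,z},{y,z}} = {}" using assms(3,4) unfolding induced_edges_def by auto
  have "x \<noteq> y" "x \<noteq> z" "y \<noteq> z" using assms(5) unfolding tri_def by auto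
  show c: "card (induced_edges E S \<union> {{x,y},{x,z},{y,z}}) = card (induced_edges E S) + 3"
    using card_Un_disjoint[OF IE_fin[OF assms(1)] _ d] card3[OF \<open>x \<noteq> y\<close> \<open>x \<noteq> z\<close> \<open>y \<noteq> z\<close>] by simp
  show "card (induced_edges E S) + 3 \<le> card (induced_edges E (insert y (insert z S)))"
    using card_mono[OF IE_fin[of "insert y (insert z S)"] s] c assms(1) by simp
qed

lemma IE_tri:
  assumes G: "graph V E" and T: "tri E a b c"
  shows "induced_edges E {a,b,c} = {{a,b},{a,c},{b,c}}" "card (induced_edges E {a,b,c}) = 3"
proof -
  have d: "a \<noteq> b" "a \<noteq> c" "b \<noteq> c" using T unfolding tri_def by auto
  show e: "induced_edges E {a,b,c} = {{a,b},{a,c},{b,c}}"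
  proof
    show "{{a,b},{a,c},{b,c}} \<subseteq> induced_edges E {a,b,c}" using T by (auto simp: IE_mem tri_def)
    show "induced_edges E {a,b,c} \<subseteq> {{a,b},{a,c},{b,c}}"
    proof
      fix e assume e: "e \<in> induced_edges E {a,b,c}"
      then have "e \<in> E" "e \<subseteq> {a,b,c}" unfolding induced_edges_def by auto
      then obtain u v where "e = {u,v}" "u \<noteq> v" using G unfolding graph_def by blast
      then show "e \<in> {{a,b},{a,c},{b,c}}" using \<open>e \<subseteq> {a,b,c}\<close> by (auto simp: insert_commute)
    qed
  qed
  show "card (induced_edges E {a,b,c}) = 3" using e card3[OF d] by simp
qed

lemma built_inv1:
  assumes "built E C S a b" "finite C"
  shows "S \<subseteq> C \<and> finite S \<and> card S = 3 + a + 2*b"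
  using assms
proof (induction rule: built.induct)
  case (base t1 t2 t3)
  then show ?case unfolding tri_def by auto
next
  case (stA S a b v p q)
  then show ?case by auto
next
  case (stB S a b x y z)
  then have "y \<noteq> z" unfolding tri_def by auto
  then show ?case using stB by auto
qed

lemma built_inv2:
  assumes "built E C S a b" "finite C" "graph V E"
  shows "10 * card S + 4*a + b \<le> 7 * card (induced_edges E S) + 9"
  using assms
proof (induction rule: built.induct)
  case (base t1 t2 t3)
  then have "card {t1,t2,t3} = 3" unfolding tri_def by auto
  then show ?case using IE_tri[OF base(6,1)] by simp
next
  case (stA S a b v p q)
  have fS: "finite S" using built_inv1[OF stA(1,10)] by simp
  have "card (insert v S) = card S + 1" using fS stA(3) by simp
  then show ?case using stA IE_A(3)[OF fS stA(3-8)] by simp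
next
  case (stB S a b x y z)
  have fS: "finite S" using built_inv1[OF stB(1,10)] by simp
  have "y \<noteq> z" using stB(8) unfolding tri_def by auto
  then have "card (insert y (insert z S)) = card S + 2" using fS stB(6,7) by simp
  then show ?case using stB IE_B(3)[OF fS stB(3,6,7,8)] by simp
qed


locale setting =
  fixes V :: "'a set" and E :: "'a set set" and C :: "'a set"
  assumes G: "graph V E" and St: "K3_1_stable V E"
    and Sp: "\<And>S. S \<subseteq> V \<Longrightarrow> card S < 25 \<Longrightarrow> 7 * card (induced_edges E S) \<le> 10 * card S"
    and Cc: "C \<in> components V E"
begin

lemma CV: "C \<subseteq> V" and fC: "finite C" and c5: "5 \<le> card C"
  and clo: "\<And>a b. a \<in> C \<Longrightarrow> {a,b} \<in> E \<Longrightarrow> b \<in> C"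
  and con: "\<And>a b. a \<in> C \<Longrightarrow> b \<in> C \<Longrightarrow> (adj E)\<^sup>*\<^sup>* a b"
  using comp_props[OF G St Cc] by auto

lemma clo': "a \<in> C \<Longrightarrow> {b,a} \<in> E \<Longrightarrow> b \<in> C"
  using clo by (metis insert_commute)

lemma ora: "a \<in> C \<Longrightarrow> {a,b} \<in> E \<longleftrightarrow> {a,b} \<in> induced_edges E C"
  using clo by (auto simp: IE_mem)

lemma edge_ne: "{a,b} \<in> E \<Longrightarrow> a \<noteq> b"
  using graph_edge[OF G] by blast

lemma bound: "built E C S a b \<Longrightarrow> 4*a + b \<le> 9"
proof (induction rule: built.induct)
  case (base t1 t2 t3)
  then show ?case by simp
next
  case (stA S a b v p q)
  have i1: "insert v S \<subseteq> C" "card (insert v S) = 3 + Suc a + 2*b"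
    using built_inv1[OF built.stA[OF stA(1-8)] fC] by auto
  have "card (insert v S) < 25" using i1 stA(9) by linarith
  then have "7 * card (induced_edges E (insert v S)) \<le> 10 * card (insert v S)"
    using Sp i1 CV by blast
  moreover have "10 * card (insert v S) + 4 * Suc a + b \<le> 7 * card (induced_edges E (insert v S)) + 9"
    using built_inv2[OF built.stA[OF stA(1-8)] fC G] .
  ultimately show ?case by linarith
next
  case (stB S a b x y z)
  have i1: "insert y (insert z S) \<subseteq> C" "card (insert y (insert z S)) = 3 + a + 2*Suc b"
    using built_inv1[OF built.stB[OF stB(1-8)] fC] by auto
  have "card (insert y (insert z S)) < 25" using i1(2) stB(9) by simp
  then have "7 * card (induced_edges E (insert y (insert z S))) \<le> 10 * card (insert y (insert z S))"
    using Sp i1 CV by blast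
  moreover have "10 * card (insert y (insert z S)) + 4 * a + Suc b \<le> 7 * card (induced_edges E (insert y (insert z S))) + 9"
    using built_inv2[OF built.stB[OF stB(1-8)] fC G] .
  ultimately show ?case by linarith
qed

lemma exists_built: "\<exists>a b. built E C C a b"
proof -
  define B where "B = {S. \<exists>a b. built E C S a b}"
  have BP: "B \<subseteq> Pow C" unfolding B_def using built_inv1 fC by blast
  have fB: "finite B" using finite_subset[OF BP] fC by simp
  obtain v where v: "v \<in> C" using c5 by fastforce
  obtain a1 b1 where t: "tri E v a1 b1" using vertex_tri[OF St] v CV by blast
  have "a1 \<in> C" "b1 \<in> C" using t clo v unfolding tri_def by blast+
  then have "{v,a1,b1} \<in> B" unfolding B_def using built.base[OF t v] by blast
  then have neB: "B \<noteq> {}" by blast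
  define m where "m = Max (card ` B)"
  have "m \<in> card ` B" unfolding m_def using fB neB by simp
  then obtain S where SB: "S \<in> B" "card S = m" by blast
  have mx: "\<And>S'. S' \<in> B \<Longrightarrow> card S' \<le> m" unfolding m_def using fB by simp
  obtain a b where bS: "built E C S a b" using SB unfolding B_def by blast
  have SC: "S \<subseteq> C" and fS: "finite S" and cS: "card S = 3 + a + 2*b" using built_inv1[OF bS fC] by auto
  show ?thesis
  proof (cases "S = C")
    case True then show ?thesis using bS by blast
  next
    case False
    then obtain w where w: "w \<in> C" "w \<notin> S" using SC by blast
    show ?thesis
    proof (cases "\<exists>v\<in>C. v \<notin> S \<and> (\<exists>p\<in>S. \<exists>q\<in>S. p \<noteq> q \<and> {v,p} \<in> E \<and> {v,q} \<in> E)")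
      case True
      then obtain v p q where vpq: "v \<in> C" "v \<notin> S" "p \<in> S" "q \<in> S" "p \<noteq> q" "{v,p} \<in> E" "{v,q} \<in> E"
        by blast
      have "built E C (insert v S) (Suc a) b" using built.stA[OF bS vpq] .
      then have "insert v S \<in> B" unfolding B_def by blast
      moreover have "card (insert v S) = m + 1" using SB fS vpq(2) by simp
      ultimately show ?thesis using mx by fastforce
    next
      case False
      then have gr: "\<forall>v\<in>C. v \<notin> S \<longrightarrow> (\<forall>p\<in>S. \<forall>q\<in>S. {v,p} \<in> E \<longrightarrow> {v,q} \<in> E \<longrightarrow> p = q)" by blast
      obtain s where s: "s \<in> S" using cS by fastforce
      have "(adj E)\<^sup>*\<^sup>* s w" using con s SC w by blast
      then obtain x y where xy: "x \<in> S" "y \<notin> S" "{x,y} \<in> E" using crossing s w by metis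
      have yC: "y \<in> C" using clo xy SC by blast
      obtain z where t: "tri E x y z" using edge_tri[OF G St xy(3)] by blast
      have zC: "z \<in> C" using clo t xy SC unfolding tri_def by blast
      have zS: "z \<notin> S"
      proof
        assume "z \<in> S"
        have "{y,x} \<in> E" "{y,z} \<in> E" using t unfolding tri_def by (auto simp: insert_commute)
        then have "x = z" using gr yC xy \<open>z \<in> S\<close> by blast
        then show False using t unfolding tri_def by auto
      qed
      have "built E C (insert y (insert z S)) a (Suc b)" using built.stB[OF bS gr xy(1) yC zC xy(2) zS t] .
      then have "insert y (insert z S) \<in> B" unfolding B_def by blast
      moreover have "y \<noteq> z" using t unfolding tri_def by auto
      then have "card (insert y (insert z S)) = m + 2" using SB fS xy(2) zS by simp
      ultimately show ?thesis using mx by fastforce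
    qed
  qed
qed

end

lemma iso_DD:
  assumes d: "distinct [x,y1,z1,z2,y2,z3,z4]"
    and CC: "C = {x,y1,z1,z2,y2,z3,z4}"
    and IE: "induced_edges E C = {{x,y1},{x,z1},{x,z2},{y1,z1},{y1,z2},{x,y2},{x,z3},{x,z4},{y2,z3},{y2,z4}}"
  shows "isomorphic C (induced_edges E C) DD_V DD_E"
proof -
  define f :: "_ \<Rightarrow> nat" where "f v = (if v = x then 0 else if v = y1 then 1 else if v = z1 then 2 else
     if v = z2 then 3 else if v = y2 then 4 else if v = z3 then 5 else 6)" for v
  have fv: "f x = 0" "f y1 = 1" "f z1 = 2" "f z2 = 3" "f y2 = 4" "f z3 = 5" "f z4 = 6"
    using d unfolding f_def by auto
  have inj: "inj_on f C" unfolding CC inj_on_def using d fv by auto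
  have im: "f ` C = DD_V" unfolding CC DD_V_def using fv by auto
  have ed: "\<forall>u\<in>C. \<forall>v\<in>C. {u, v} \<in> induced_edges E C \<longleftrightarrow> {f u, f v} \<in> DD_E"
    unfolding IE unfolding CC using d fv by (auto simp: DD_E_def doubleton_eq_iff)
  show ?thesis unfolding isomorphic_def bij_betw_def using inj im ed by blast
qed

lemma iso_TT:
  assumes d: "distinct [v1,v2,v3,v4,v5]"
    and CC: "C = {v1,v2,v3,v4,v5}"
    and IE: "induced_edges E C = {{v1,v2},{v1,v3},{v2,v3},{v2,v4},{v3,v4},{v3,v5},{v4,v5}}"
  shows "isomorphic C (induced_edges E C) TT_V TT_E"
proof -
  define f :: "_ \<Rightarrow> nat" where "f v = (if v = v1 then 1 else if v = v2 then 2 else if v = v3 then 3 else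
     if v = v4 then 4 else 5)" for v
  have fv: "f v1 = 1" "f v2 = 2" "f v3 = 3" "f v4 = 4" "f v5 = 5"
    using d unfolding f_def by auto
  have inj: "inj_on f C" unfolding CC inj_on_def using d fv by auto
  have im: "f ` C = TT_V" unfolding CC TT_V_def using fv by auto
  have ed: "\<forall>u\<in>C. \<forall>v\<in>C. {u, v} \<in> induced_edges E C \<longleftrightarrow> {f u, f v} \<in> TT_E"
    unfolding IE unfolding CC using d fv by (auto simp: TT_E_def doubleton_eq_iff)
  show ?thesis unfolding isomorphic_def bij_betw_def using inj im ed by blast
qed


context setting begin

lemma tri_sym_edges: assumes "tri E a b c" shows "{b,a} \<in> E \<and> {c,a} \<in> E \<and> {c,b} \<in> E \<and> {a,b} \<in> E \<and> {a,c} \<in> E \<and> {b,c} \<in> E"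
  using tri_edges[OF assms] by simp

lemma bad_pair_nbrs:
  assumes "y \<in> C" "z \<in> C" "y \<noteq> z"
    and Ny: "\<And>v. {y,v} \<in> E \<Longrightarrow> v = x \<or> v = z"
    and Nz: "\<And>v. {z,v} \<in> E \<Longrightarrow> v = x \<or> v = y"
  shows False
proof (rule no_bad_pair[OF St _ _ assms(3)])
  show "y \<in> V" "z \<in> V" using assms CV by auto
  show "z = a \<or> z = b" if "tri E y a b" for a b
  proof -
    have "{y,a} \<in> E" "{y,b} \<in> E" "a \<noteq> b" using that unfolding tri_def by auto
    then show ?thesis using Ny[of a] Ny[of b] by blast
  qed
  show "y = a \<or> y = b" if "tri E z a b" for a b
  proof -
    have "{z,a} \<in> E" "{z,b} \<in> E" "a \<noteq> b" using that unfolding tri_def by auto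
    then show ?thesis using Nz[of a] Nz[of b] by blast
  qed
qed

lemma lastB_false:
  assumes bS: "built E C S a b"
    and gr: "\<forall>v\<in>C. v \<notin> S \<longrightarrow> (\<forall>p\<in>S. \<forall>q\<in>S. {v,p} \<in> E \<longrightarrow> {v,q} \<in> E \<longrightarrow> p = q)"
    and x: "x \<in> S" and yz: "y \<in> C" "z \<in> C" "y \<notin> S" "z \<notin> S" and t: "tri E x y z"
    and CC: "C = insert y (insert z S)"
  shows False
proof (rule bad_pair_nbrs[OF yz(1,2)])
  show "y \<noteq> z" using t unfolding tri_def by auto
  have e: "{y,x} \<in> E" "{z,x} \<in> E" using t tri_sym_edges by auto
  show "v = x \<or> v = z" if "{y,v} \<in> E" for v
  proof -
    have "v \<in> C" using clo that yz by blast
    moreover have "v \<noteq> y" using edge_ne that by blast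
    ultimately have "v \<in> S \<or> v = z" using CC by auto
    then show ?thesis using gr yz e(1) that x by blast
  qed
  show "v = x \<or> v = y" if "{z,v} \<in> E" for v
  proof -
    have "v \<in> C" using clo that yz by blast
    moreover have "v \<noteq> z" using edge_ne that by blast
    ultimately have "v \<in> S \<or> v = y" using CC by auto
    then show ?thesis using gr yz e(2) that x by blast
  qed
qed

lemma built00: "built E C S 0 0 \<Longrightarrow> \<exists>t1 t2 t3. S = {t1,t2,t3} \<and> tri E t1 t2 t3 \<and> t1 \<in> C \<and> t2 \<in> C \<and> t3 \<in> C"
  by (cases rule: built.cases) auto

definition leaf :: "'a set \<Rightarrow> 'a \<Rightarrow> 'a \<Rightarrow> 'a \<Rightarrow> bool" where
  "leaf S x y z \<longleftrightarrow> tri E x y z \<and> x \<in> S \<and> y \<in> S \<and> z \<in> S \<and>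
     (\<forall>v\<in>S. {y,v} \<in> E \<longrightarrow> v = x \<or> v = z) \<and> (\<forall>v\<in>S. {z,v} \<in> E \<longrightarrow> v = x \<or> v = y)"

lemma leaf_new:
  assumes gr: "\<forall>v\<in>C. v \<notin> S \<longrightarrow> (\<forall>p\<in>S. \<forall>q\<in>S. {v,p} \<in> E \<longrightarrow> {v,q} \<in> E \<longrightarrow> p = q)"
    and x: "x \<in> S" and yz: "y \<in> C" "z \<in> C" "y \<notin> S" "z \<notin> S" and t: "tri E x y z"
  shows "leaf (insert y (insert z S)) x y z"
proof -
  have e: "{y,x} \<in> E" "{z,x} \<in> E" using t tri_sym_edges by auto
  have "y \<noteq> z" using t unfolding tri_def by auto
  have a: "v = x \<or> v = z" if "v \<in> insert y (insert z S)" "{y,v} \<in> E" for v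
  proof -
    have "v \<noteq> y" using edge_ne that(2) by blast
    then have "v = z \<or> v \<in> S" using that(1) by blast
    then show ?thesis using gr yz(1,3) x e(1) that(2) by blast
  qed
  have b: "v = x \<or> v = y" if "v \<in> insert y (insert z S)" "{z,v} \<in> E" for v
  proof -
    have "v \<noteq> z" using edge_ne that(2) by blast
    then have "v = y \<or> v \<in> S" using that(1) by blast
    then show ?thesis using gr yz(2,4) x e(2) that(2) by blast
  qed
  show ?thesis unfolding leaf_def using t x a b by blast
qed

lemma leaf_keep:
  assumes lf: "leaf S x1 y1 z1"
    and gr: "\<forall>v\<in>C. v \<notin> S \<longrightarrow> (\<forall>p\<in>S. \<forall>q\<in>S. {v,p} \<in> E \<longrightarrow> {v,q} \<in> E \<longrightarrow> p = q)"
    and x: "x \<in> S" and yz: "y \<in> C" "z \<in> C" "y \<notin> S" "z \<notin> S" and t: "tri E x y z"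
    and nx: "x \<noteq> y1" "x \<noteq> z1"
  shows "leaf (insert y (insert z S)) x1 y1 z1"
proof -
  have e: "{y,x} \<in> E" "{z,x} \<in> E" using t tri_sym_edges by auto
  have y1z1: "y1 \<in> S" "z1 \<in> S" using lf unfolding leaf_def by auto
  have ny: "{y1,y} \<notin> E" "{y1,z} \<notin> E" "{z1,y} \<notin> E" "{z1,z} \<notin> E"
  proof -
    have "\<And>u. u \<in> S \<Longrightarrow> u \<noteq> x \<Longrightarrow> {u,y} \<notin> E"
    proof
      fix u assume u: "u \<in> S" "u \<noteq> x" "{u,y} \<in> E"
      then have "{y,u} \<in> E" by (simp add: insert_commute)
      then show False using gr yz(1,3) x e(1) u(1,2) by blast
    qed
    moreover have "\<And>u. u \<in> S \<Longrightarrow> u \<noteq> x \<Longrightarrow> {u,z} \<notin> E"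
    proof
      fix u assume u: "u \<in> S" "u \<noteq> x" "{u,z} \<in> E"
      then have "{z,u} \<in> E" by (simp add: insert_commute)
      then show False using gr yz(2,4) x e(2) u(1,2) by blast
    qed
    ultimately show "{y1,y} \<notin> E" "{y1,z} \<notin> E" "{z1,y} \<notin> E" "{z1,z} \<notin> E"
      using y1z1 nx by metis+
  qed
  have "\<forall>v\<in>insert y (insert z S). {y1,v} \<in> E \<longrightarrow> v = x1 \<or> v = z1" using lf ny unfolding leaf_def by blast
  moreover have "\<forall>v\<in>insert y (insert z S). {z1,v} \<in> E \<longrightarrow> v = x1 \<or> v = y1" using lf ny unfolding leaf_def by blast
  ultimately show ?thesis using lf unfolding leaf_def by blast
qed

lemma weak2:
  assumes "built E C S a b" "a = 0" "1 \<le> b"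
  shows "\<exists>x1 y1 z1 x2 y2 z2. leaf S x1 y1 z1 \<and> leaf S x2 y2 z2 \<and> y1 \<noteq> y2 \<and> y1 \<noteq> z2 \<and> z1 \<noteq> y2 \<and> z1 \<noteq> z2"
  using assms
proof (induction rule: built.induct)
  case (base t1 t2 t3) then show ?case by simp
next
  case (stA S a b v p q) then show ?case by simp
next
  case (stB S a b x y z)
  have L0: "leaf (insert y (insert z S)) x y z" using leaf_new[OF stB(2-8)] .
  show ?case
  proof (cases "b = 0")
    case True
    then obtain t1 t2 t3 where T: "S = {t1,t2,t3}" "tri E t1 t2 t3" "t1 \<in> C" "t2 \<in> C" "t3 \<in> C"
      using built00 stB(1,10) by blast
    have "x \<in> {t1,t2,t3}" using stB(3) T(1) by simp
    then obtain t t' where tt: "tri E x t t'" "t \<in> {t1,t2,t3}" "t' \<in> {t1,t2,t3}" using tri_one[OF T(2)] by blast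
    have xtt: "{x,t,t'} = {t1,t2,t3}" using tt T(2) \<open>x \<in> {t1,t2,t3}\<close> unfolding tri_def by auto
    have e: "{y,x} \<in> E" "{z,x} \<in> E" using stB(8) tri_sym_edges by auto
    have "leaf S x t t'"
    proof -
      have "\<forall>v\<in>S. {t,v} \<in> E \<longrightarrow> v = x \<or> v = t'" using T(1) xtt edge_ne by auto
      moreover have "\<forall>v\<in>S. {t',v} \<in> E \<longrightarrow> v = x \<or> v = t" using T(1) xtt edge_ne by auto
      ultimately show ?thesis unfolding leaf_def using tt T(1) xtt by auto
    qed
    moreover have "x \<noteq> t" "x \<noteq> t'" using tt unfolding tri_def by auto
    ultimately have L1: "leaf (insert y (insert z S)) x t t'" using leaf_keep[OF _ stB(2-8)] by blast
    have "t \<in> S" "t' \<in> S" using tt T(1) by auto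
    then have "y \<noteq> t" "y \<noteq> t'" "z \<noteq> t" "z \<noteq> t'" using stB(6,7) by auto
    then show ?thesis using L0 L1 by blast
  next
    case False
    then obtain x1 y1 z1 x2 y2 z2 where P: "leaf S x1 y1 z1" "leaf S x2 y2 z2"
      "y1 \<noteq> y2" "y1 \<noteq> z2" "z1 \<noteq> y2" "z1 \<noteq> z2"
      using stB.IH stB(10) by auto
    have ins: "y1 \<in> S" "z1 \<in> S" "y2 \<in> S" "z2 \<in> S" using P unfolding leaf_def by auto
    show ?thesis
    proof (cases "x = y1 \<or> x = z1")
      case True
      then have "x \<noteq> y2" "x \<noteq> z2" using P by auto
      then have "leaf (insert y (insert z S)) x2 y2 z2" using leaf_keep[OF P(2) stB(2-8)] by blast
      moreover have "y \<noteq> y2" "y \<noteq> z2" "z \<noteq> y2" "z \<noteq> z2" using ins stB(6,7) by auto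
      ultimately show ?thesis using L0 by blast
    next
      case False
      then have "leaf (insert y (insert z S)) x1 y1 z1" using leaf_keep[OF P(1) stB(2-8)] by blast
      moreover have "y \<noteq> y1" "y \<noteq> z1" "z \<noteq> y1" "z \<noteq> z1" using ins stB(6,7) by auto
      ultimately show ?thesis using L0 by blast
    qed
  qed
qed

end

context setting begin

lemma final_A_nbrs:
  assumes bS: "built E C S a b" and CC: "C = insert w S" and w: "w \<notin> S"
    and pq: "p \<in> S" "q \<in> S" "p \<noteq> q" "{w,p} \<in> E" "{w,q} \<in> E"
    and r: "{w,r} \<in> E"
  shows "r = p \<or> r = q"
proof (rule ccontr)
  assume nr: "\<not> (r = p \<or> r = q)"
  have wC: "w \<in> C" using CC by simp
  have "r \<in> C" using clo[OF wC r] .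
  moreover have "r \<noteq> w" using edge_ne[OF r] by simp
  ultimately have rS: "r \<in> S" using CC by simp
  have fS: "finite S" and cS: "card S = 3 + a + 2*b" using built_inv1[OF bS fC] by auto
  note A = IE_A[OF fS w pq]
  let ?U = "induced_edges E S \<union> {{w,p},{w,q}}"
  have nU: "{w,r} \<notin> ?U" using w rS nr unfolding induced_edges_def by (auto simp: doubleton_eq_iff)
  have "insert {w,r} ?U \<subseteq> induced_edges E (insert w S)" using A(1) r rS by (auto simp: IE_mem)
  moreover have "card (insert {w,r} ?U) = card (induced_edges E S) + 3"
    using nU A(2) IE_fin[OF fS] by simp
  ultimately have e3: "card (induced_edges E S) + 3 \<le> card (induced_edges E C)"
    using card_mono[OF IE_fin[of C] ] fC CC by metis
  have i2: "10 * card S + 4*a + b \<le> 7 * card (induced_edges E S) + 9" using built_inv2[OF bS fC G] .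
  have "built E C C (Suc a) b" using built.stA[OF bS wC w pq] CC by simp
  then have "4 * Suc a + b \<le> 9" using bound by blast
  moreover have "card C = card S + 1" using CC fS w by simp
  ultimately have "card C < 25" using cS by simp
  then have "7 * card (induced_edges E C) \<le> 10 * card C" using Sp CV by blast
  then show False using e3 i2 \<open>card C = card S + 1\<close> by linarith
qed

lemma leaf_nb: "leaf S x y z \<Longrightarrow> u = y \<or> u = z \<Longrightarrow> v \<in> S \<Longrightarrow> {u,v} \<in> E \<Longrightarrow> v = x \<or> v = y \<or> v = z"
  unfolding leaf_def by blast

lemma a1_false:
  assumes bS: "built E C S 0 b" and CC: "C = insert w S" and w: "w \<notin> S"
    and pq: "p \<in> S" "q \<in> S" "p \<noteq> q" "{w,p} \<in> E" "{w,q} \<in> E"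
  shows False
proof (cases "b = 0")
  case True
  then obtain t1 t2 t3 where "S = {t1,t2,t3}" using built00 bS by blast
  then have "card C \<le> 4" using CC by (simp add: card_insert_le_m1 card_insert_if)
  then show False using c5 by simp
next
  case False
  then obtain x1 y1 z1 x2 y2 z2 where P: "leaf S x1 y1 z1" "leaf S x2 y2 z2"
      "y1 \<noteq> y2" "y1 \<noteq> z2" "z1 \<noteq> y2" "z1 \<noteq> z2"
    using weak2[OF bS] by auto
  have Nw: "\<And>r. {w,r} \<in> E \<Longrightarrow> r = p \<or> r = q" using final_A_nbrs[OF bS CC w pq] by blast
  have wC: "w \<in> C" using CC by simp
  obtain r where "tri E w p r" using edge_tri[OF G St pq(4)] by blast
  then have "{w,r} \<in> E" "r \<noteq> p" "{p,r} \<in> E" unfolding tri_def by auto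
  then have pqE: "{p,q} \<in> E" using Nw by blast
  have lb: "False" if lf: "leaf S x y z" and ny: "y \<noteq> p" "y \<noteq> q" "z \<noteq> p" "z \<noteq> q" for x y z
  proof -
    have yz: "y \<in> S" "z \<in> S" "y \<noteq> z" using lf unfolding leaf_def tri_def by auto
    show False
    proof (rule bad_pair_nbrs[of y z x])
      show "y \<in> C" "z \<in> C" "y \<noteq> z" using yz CC by auto
      show "v = x \<or> v = z" if "{y,v} \<in> E" for v
      proof -
        have "v \<in> C" using clo that yz CC by blast
        moreover have "v \<noteq> w" using Nw ny that by (metis insert_commute)
        ultimately have "v \<in> S" using CC by simp
        then show ?thesis using lf that unfolding leaf_def by blast
      qed
      show "v = x \<or> v = y" if "{z,v} \<in> E" for v
      proof -
        have "v \<in> C" using clo that yz CC by blast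
        moreover have "v \<noteq> w" using Nw ny that by (metis insert_commute)
        ultimately have "v \<in> S" using CC by simp
        then show ?thesis using lf that unfolding leaf_def by blast
      qed
    qed
  qed
  obtain u1 where u1: "u1 = y1 \<or> u1 = z1" "u1 = p \<or> u1 = q" using lb[OF P(1)] by blast
  obtain u2 where u2: "u2 = y2 \<or> u2 = z2" "u2 = p \<or> u2 = q" using lb[OF P(2)] by blast
  have "u1 \<noteq> u2" using u1 u2 P(3-6) by blast
  then have ue: "{u1,u2} \<in> E" using u1(2) u2(2) pqE by (auto simp: insert_commute)
  have inS: "u1 \<in> S" "u2 \<in> S" using u1 u2 pq by auto
  have "u2 = x1" using leaf_nb[OF P(1) u1(1) inS(2) ue] u2(1) P(3-6) by blast
  have "u1 = x2" using leaf_nb[OF P(2) u2(1) inS(1)] ue u1(1) P(3-6) by (metis insert_commute)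
  have t1: "{u2,y1} \<in> E" "{u2,z1} \<in> E" "y1 \<in> S" "z1 \<in> S" "y1 \<noteq> z1"
    using P(1) \<open>u2 = x1\<close> unfolding leaf_def tri_def by auto
  have "y1 = x2" using leaf_nb[OF P(2) u2(1) t1(3) t1(1)] P(3,4) by blast
  moreover have "z1 = x2" using leaf_nb[OF P(2) u2(1) t1(4) t1(2)] P(5,6) by blast
  ultimately show False using t1(5) by simp
qed

end

lemma pair_cases: "{p,q} = {a,b} \<Longrightarrow> (p = a \<and> q = b) \<or> (p = b \<and> q = a)"
  by (auto simp: doubleton_eq_iff)

context setting begin

lemma bp_check:
  assumes "y \<in> C" "z \<in> C" "y \<noteq> z"
    and Hy: "\<And>a b. {y,a} \<in> induced_edges E C \<Longrightarrow> {y,b} \<in> induced_edges E C \<Longrightarrow> {a,b} \<in> induced_edges E C \<Longrightarrow> a \<noteq> b \<Longrightarrow> z = a \<or> z = b"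
    and Hz: "\<And>a b. {z,a} \<in> induced_edges E C \<Longrightarrow> {z,b} \<in> induced_edges E C \<Longrightarrow> {a,b} \<in> induced_edges E C \<Longrightarrow> a \<noteq> b \<Longrightarrow> y = a \<or> y = b"
  shows False
proof (rule no_bad_pair[OF St _ _ assms(3)])
  show "y \<in> V" "z \<in> V" using assms(1,2) CV by auto
  show "z = a \<or> z = b" if "tri E y a b" for a b
  proof -
    have e: "{y,a} \<in> E" "{y,b} \<in> E" "{a,b} \<in> E" "a \<noteq> b" using that unfolding tri_def by auto
    have "a \<in> C" using clo[OF assms(1) e(1)] .
    then show ?thesis using Hy e ora assms(1) by blast
  qed
  show "y = a \<or> y = b" if "tri E z a b" for a b
  proof -
    have e: "{z,a} \<in> E" "{z,b} \<in> E" "{a,b} \<in> E" "a \<noteq> b" using that unfolding tri_def by auto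
    have "a \<in> C" using clo[OF assms(2) e(1)] .
    then show ?thesis using Hz e ora assms(2) by blast
  qed
qed

lemma w_pq_edge:
  assumes wC: "w \<in> C" and Nw: "\<And>r. {w,r} \<in> induced_edges E C \<Longrightarrow> r = p \<or> r = q"
    and wp: "{w,p} \<in> induced_edges E C"
  shows "{p,q} \<in> induced_edges E C"
proof -
  have "{w,p} \<in> E" using wp unfolding induced_edges_def by auto
  then obtain r where t: "tri E w p r" using edge_tri[OF G St] by blast
  then have "{w,r} \<in> E" "r \<noteq> p" "{p,r} \<in> E" unfolding tri_def by auto
  then have "r = q" "{p,r} \<in> E" using Nw ora wC by blast+
  moreover have "p \<in> C" using clo[OF wC \<open>{w,p} \<in> E\<close>] .
  ultimately show ?thesis using ora by blast
qed

end

context setting begin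

lemma coreD:
  assumes d: "distinct [x,t,t',u,y,z,w]"
    and CC: "C = {x,t,t',u,y,z,w}"
    and IE: "induced_edges E C = {{x,t},{x,t'},{t,t'},{x,u},{t,u},{x,y},{x,z},{y,z},{w,p},{w,q}}"
    and pq: "p \<in> {x,t,t',u,y,z}" "q \<in> {x,t,t',u,y,z}" "p \<noteq> q"
  shows "isomorphic C (induced_edges E C) DD_V DD_E"
proof -
  have "{p,q} \<in> induced_edges E C"
  proof (rule w_pq_edge[of w])
    show "w \<in> C" using CC by simp
  qed (use d pq in \<open>auto simp: IE doubleton_eq_iff\<close>)
  then have "{p,q} \<in> {{x,t},{x,t'},{t,t'},{x,u},{t,u},{x,y},{x,z},{y,z}}"
    using d pq unfolding IE by (auto simp: doubleton_eq_iff)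
  then consider "{p,q} = {x,y}" | "{p,q} = {x,z}" | "{p,q} = {y,z}" | "y \<noteq> p" "y \<noteq> q" "z \<noteq> p" "z \<noteq> q"
    using d by (auto simp: doubleton_eq_iff)
  then show ?thesis
  proof cases
    case 1
    have "induced_edges E C = {{x,t},{x,t'},{x,u},{t,t'},{t,u},{x,y},{x,z},{x,w},{y,z},{y,w}}"
      using pair_cases[OF 1] IE by (elim disjE conjE) (simp_all add: insert_commute)
    then show ?thesis by (rule iso_DD[OF d CC])
  next
    case 2
    have i1: "induced_edges E C = {{x,t},{x,t'},{x,u},{t,t'},{t,u},{x,z},{x,y},{x,w},{z,y},{z,w}}"
      using pair_cases[OF 2] IE by (elim disjE conjE) (simp_all add: insert_commute)
    have i2: "distinct [x,t,t',u,z,y,w]" using d by auto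
    have i3: "C = {x,t,t',u,z,y,w}" using CC by (simp add: insert_commute)
    show ?thesis by (rule iso_DD[OF i2 i3 i1])
  next
    case 3
    have IE3: "induced_edges E C = {{x,t},{x,t'},{t,t'},{x,u},{t,u},{x,y},{x,z},{y,z},{w,y},{w,z}}"
      using pair_cases[OF 3] IE by (elim disjE conjE) (simp_all add: insert_commute)
    show ?thesis
    proof (rule FalseE, rule bp_check[of y z])
      show "y \<in> C" "z \<in> C" "y \<noteq> z" using d CC by auto
    qed (use d in \<open>auto simp: IE3 doubleton_eq_iff\<close>)
  next
    case 4
    show ?thesis
    proof (rule FalseE, rule bp_check[of y z])
      show "y \<in> C" "z \<in> C" "y \<noteq> z" using d CC by auto
    qed (use d 4 in \<open>auto simp: IE doubleton_eq_iff\<close>)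
  qed
qed

lemma coreF:
  assumes d: "distinct [s1,s2,x,u,y,z,w]"
    and CC: "C = {s1,s2,x,u,y,z,w}"
    and IE: "induced_edges E C = {{s1,s2},{s1,x},{s2,x},{s1,u},{s2,u},{x,y},{x,z},{y,z},{w,p},{w,q}}"
    and pq: "p \<in> {s1,s2,x,u,y,z}" "q \<in> {s1,s2,x,u,y,z}" "p \<noteq> q"
  shows False
proof -
  have "{p,q} \<in> induced_edges E C"
  proof (rule w_pq_edge[of w])
    show "w \<in> C" using CC by simp
  qed (use d pq in \<open>auto simp: IE doubleton_eq_iff\<close>)
  then have "{p,q} \<in> {{s1,s2},{s1,x},{s2,x},{s1,u},{s2,u},{x,y},{x,z},{y,z}}"
    using d pq unfolding IE by (auto simp: doubleton_eq_iff)
  then consider "{p,q} = {x,y}" | "{p,q} = {x,z}" | "{p,q} = {y,z}" | "y \<noteq> p" "y \<noteq> q" "z \<noteq> p" "z \<noteq> q"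
    using d by (auto simp: doubleton_eq_iff)
  then show ?thesis
  proof cases
    case 1
    have IE1: "induced_edges E C = {{s1,s2},{s1,x},{s2,x},{s1,u},{s2,u},{x,y},{x,z},{y,z},{w,x},{w,y}}"
      using pair_cases[OF 1] IE by (elim disjE conjE) (simp_all add: insert_commute)
    show ?thesis
    proof (rule bp_check[of s1 s2])
      show "s1 \<in> C" "s2 \<in> C" "s1 \<noteq> s2" using d CC by auto
    qed (use d in \<open>auto simp: IE1 doubleton_eq_iff\<close>)
  next
    case 2
    have IE2: "induced_edges E C = {{s1,s2},{s1,x},{s2,x},{s1,u},{s2,u},{x,y},{x,z},{y,z},{w,x},{w,z}}"
      using pair_cases[OF 2] IE by (elim disjE conjE) (simp_all add: insert_commute)
    show ?thesis
    proof (rule bp_check[of s1 s2])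
      show "s1 \<in> C" "s2 \<in> C" "s1 \<noteq> s2" using d CC by auto
    qed (use d in \<open>auto simp: IE2 doubleton_eq_iff\<close>)
  next
    case 3
    have IE3: "induced_edges E C = {{s1,s2},{s1,x},{s2,x},{s1,u},{s2,u},{x,y},{x,z},{y,z},{w,y},{w,z}}"
      using pair_cases[OF 3] IE by (elim disjE conjE) (simp_all add: insert_commute)
    show ?thesis
    proof (rule bp_check[of s1 s2])
      show "s1 \<in> C" "s2 \<in> C" "s1 \<noteq> s2" using d CC by auto
    qed (use d in \<open>auto simp: IE3 doubleton_eq_iff\<close>)
  next
    case 4
    show ?thesis
    proof (rule bp_check[of y z])
      show "y \<in> C" "z \<in> C" "y \<noteq> z" using d CC by auto
    qed (use d 4 in \<open>auto simp: IE doubleton_eq_iff\<close>)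
  qed
qed

lemma coreAA:
  assumes d: "distinct [p1,q1,r1,u,w]"
    and CC: "C = {p1,q1,r1,u,w}"
    and IE: "induced_edges E C = {{p1,q1},{p1,r1},{q1,r1},{u,p1},{u,q1},{w,p},{w,q}}"
    and pq: "p \<in> {p1,q1,r1,u}" "q \<in> {p1,q1,r1,u}" "p \<noteq> q"
  shows "isomorphic C (induced_edges E C) TT_V TT_E"
proof -
  have "{p,q} \<in> induced_edges E C"
  proof (rule w_pq_edge[of w])
    show "w \<in> C" using CC by simp
  qed (use d pq in \<open>auto simp: IE doubleton_eq_iff\<close>)
  then have "{p,q} \<in> {{p1,q1},{p1,r1},{q1,r1},{u,p1},{u,q1}}"
    using d pq unfolding IE by (auto simp: doubleton_eq_iff)
  then consider "{p,q} = {p1,q1}" | "{p,q} = {p1,r1}" | "{p,q} = {q1,r1}" | "{p,q} = {u,p1}" | "{p,q} = {u,q1}"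
    by blast
  then show ?thesis
  proof cases
    case 1
    have IE1: "induced_edges E C = {{p1,q1},{p1,r1},{q1,r1},{u,p1},{u,q1},{w,p1},{w,q1}}"
      using pair_cases[OF 1] IE by (elim disjE conjE) (simp_all add: insert_commute)
    show ?thesis
    proof (rule FalseE, rule bp_check[of p1 q1])
      show "p1 \<in> C" "q1 \<in> C" "p1 \<noteq> q1" using d CC by auto
    qed (use d in \<open>auto simp: IE1 doubleton_eq_iff\<close>)
  next
    case 2
    have i1: "induced_edges E C = {{u,q1},{u,p1},{q1,p1},{q1,r1},{p1,r1},{p1,w},{r1,w}}"
      using pair_cases[OF 2] IE by (elim disjE conjE) (simp_all add: insert_commute)
    have i2: "distinct [u,q1,p1,r1,w]" using d by auto
    have i3: "C = {u,q1,p1,r1,w}" using CC by (simp add: insert_commute)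
    show ?thesis by (rule iso_TT[OF i2 i3 i1])
  next
    case 3
    have i1: "induced_edges E C = {{u,p1},{u,q1},{p1,q1},{p1,r1},{q1,r1},{q1,w},{r1,w}}"
      using pair_cases[OF 3] IE by (elim disjE conjE) (simp_all add: insert_commute)
    have i2: "distinct [u,p1,q1,r1,w]" using d by auto
    have i3: "C = {u,p1,q1,r1,w}" using CC by (simp add: insert_commute)
    show ?thesis by (rule iso_TT[OF i2 i3 i1])
  next
    case 4
    have i1: "induced_edges E C = {{r1,q1},{r1,p1},{q1,p1},{q1,u},{p1,u},{p1,w},{u,w}}"
      using pair_cases[OF 4] IE by (elim disjE conjE) (simp_all add: insert_commute)
    have i2: "distinct [r1,q1,p1,u,w]" using d by auto
    have i3: "C = {r1,q1,p1,u,w}" using CC by (simp add: insert_commute)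
    show ?thesis by (rule iso_TT[OF i2 i3 i1])
  next
    case 5
    have i1: "induced_edges E C = {{r1,p1},{r1,q1},{p1,q1},{p1,u},{q1,u},{q1,w},{u,w}}"
      using pair_cases[OF 5] IE by (elim disjE conjE) (simp_all add: insert_commute)
    have i2: "distinct [r1,p1,q1,u,w]" using d by auto
    have i3: "C = {r1,p1,q1,u,w}" using CC by (simp add: insert_commute)
    show ?thesis by (rule iso_TT[OF i2 i3 i1])
  qed
qed

end

lemma tri_relabel:
  assumes T: "tri E t1 t2 t3" and pq: "p1 \<in> {t1,t2,t3}" "q1 \<in> {t1,t2,t3}" "p1 \<noteq> q1"
  shows "\<exists>r1. {t1,t2,t3} = {p1,q1,r1} \<and> tri E p1 q1 r1"
proof -
  obtain r1 where r: "tri E p1 q1 r1" "r1 \<in> {t1,t2,t3}" using tri_pair[OF T pq] by blast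
  have "p1 \<noteq> r1" "q1 \<noteq> r1" using r(1) unfolding tri_def by auto
  moreover have "t1 \<noteq> t2" "t1 \<noteq> t3" "t2 \<noteq> t3" using T unfolding tri_def by auto
  ultimately have "{t1,t2,t3} = {p1,q1,r1}" using pq r(2) by auto
  then show ?thesis using r(1) by blast
qed

lemma tri_relabel1:
  assumes T: "tri E t1 t2 t3" and x: "x \<in> {t1,t2,t3}"
  shows "\<exists>t t'. {t1,t2,t3} = {x,t,t'} \<and> tri E x t t'"
proof -
  obtain t t' where r: "tri E x t t'" "t \<in> {t1,t2,t3}" "t' \<in> {t1,t2,t3}" using tri_one[OF T x] by blast
  have "x \<noteq> t" "x \<noteq> t'" "t \<noteq> t'" using r(1) unfolding tri_def by auto
  moreover have "t1 \<noteq> t2" "t1 \<noteq> t3" "t2 \<noteq> t3" using T unfolding tri_def by auto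
  ultimately have "{t1,t2,t3} = {x,t,t'}" using x r(2,3) by auto
  then show ?thesis using r(1) by blast
qed

lemma exact_sub: "finite B \<Longrightarrow> A \<subseteq> B \<Longrightarrow> card B \<le> card A \<Longrightarrow> B = A"
  using card_subset_eq[of B A] card_mono[of B A] by simp

context setting begin

lemma caseAA:
  assumes T: "tri E t1 t2 t3"
    and u: "u \<notin> {t1,t2,t3}" and p1q1: "p1 \<in> {t1,t2,t3}" "q1 \<in> {t1,t2,t3}" "p1 \<noteq> q1" "{u,p1} \<in> E" "{u,q1} \<in> E"
    and CC: "C = insert w (insert u {t1,t2,t3})" and w: "w \<notin> insert u {t1,t2,t3}"
    and pq: "p \<in> insert u {t1,t2,t3}" "q \<in> insert u {t1,t2,t3}" "p \<noteq> q" "{w,p} \<in> E" "{w,q} \<in> E"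
  shows "isomorphic C (induced_edges E C) TT_V TT_E"
proof -
  obtain r1 where r1: "{t1,t2,t3} = {p1,q1,r1}" "tri E p1 q1 r1" using tri_relabel[OF T p1q1(1-3)] by blast
  let ?T = "{p1,q1,r1}"
  let ?S = "insert u ?T"
  have d0: "p1 \<noteq> q1" "p1 \<noteq> r1" "q1 \<noteq> r1" using r1(2) unfolding tri_def by auto
  have u': "u \<notin> ?T" and w': "w \<notin> ?S" and CC': "C = insert w ?S" using u w CC r1(1) by auto
  have pq': "p \<in> ?S" "q \<in> ?S" using pq r1(1) by auto
  have e0: "induced_edges E ?T = {{p1,q1},{p1,r1},{q1,r1}}" using IE_tri[OF G r1(2)] by simp
  have fT: "finite ?T" by simp
  have fS: "finite ?S" by simp
  note A1 = IE_A[OF fT u' _ _ p1q1(3-5)]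
  note A2 = IE_A[OF fS w' pq'(1,2) pq(3-5)]
  have cC: "card C = 5" using CC' d0 u' w' by simp
  then have "7 * card (induced_edges E C) \<le> 10 * card C" using Sp[OF CV] by simp
  then have eC: "card (induced_edges E C) \<le> 7" using cC by simp
  have c0: "card (induced_edges E ?T) = 3" using IE_tri[OF G r1(2)] by simp
  have eS: "card (induced_edges E ?S) \<le> 5" using A2(3) eC CC' by simp
  have IS: "induced_edges E ?S = induced_edges E ?T \<union> {{u,p1},{u,q1}}"
    by (rule exact_sub[OF IE_fin[OF fS] A1(1)]) (use A1(2) c0 eS in simp_all)
  have IC: "induced_edges E C = induced_edges E ?S \<union> {{w,p},{w,q}}"
    unfolding CC' by (rule exact_sub[OF IE_fin A2(1)]) (use A2(2) IS A1(2) c0 eC CC' fS in simp_all)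
  have IC': "induced_edges E C = {{p1,q1},{p1,r1},{q1,r1},{u,p1},{u,q1},{w,p},{w,q}}"
    using IC IS e0 by (simp add: insert_commute)
  have d: "distinct [p1,q1,r1,u,w]" using d0 u' w' by auto
  have CC2: "C = {p1,q1,r1,u,w}" using CC' by auto
  show ?thesis by (rule coreAA[OF d CC2 IC']) (use pq' pq(3) in auto)
qed

lemma coreN:
  assumes d: "distinct [x,t,t',y,z,u,w]"
    and CC: "C = {x,t,t',y,z,u,w}"
    and IE: "induced_edges E C = {{x,t},{x,t'},{t,t'},{x,y},{x,z},{y,z},{u,t},{u,y},{w,p},{w,q}}"
    and pq: "p \<noteq> q"
  shows False
proof -
  have uC: "u \<in> C" using CC by simp
  have "{u,t} \<in> induced_edges E C" "{u,y} \<in> induced_edges E C" unfolding IE by simp_all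
  then have "{u,t} \<in> E" "{u,y} \<in> E" unfolding induced_edges_def by auto
  obtain r where r: "tri E u t r" using edge_tri[OF G St \<open>{u,t} \<in> E\<close>] by blast
  obtain r' where r': "tri E u y r'" using edge_tri[OF G St \<open>{u,y} \<in> E\<close>] by blast
  have tC: "t \<in> C" "y \<in> C" using CC by auto
  have Nw: "\<And>v. {w,v} \<in> induced_edges E C \<Longrightarrow> v = p \<or> v = q"
    using d unfolding IE by (auto simp: doubleton_eq_iff)
  have Nu: "\<And>v. {u,v} \<in> induced_edges E C \<Longrightarrow> v = t \<or> v = y \<or> v = w"
    using d unfolding IE by (auto simp: doubleton_eq_iff)
  have nty: "{t,y} \<notin> induced_edges E C" "{y,t} \<notin> induced_edges E C"
    using d unfolding IE by (auto simp: doubleton_eq_iff)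
  have e1: "{u,r} \<in> induced_edges E C" "{t,r} \<in> induced_edges E C" "r \<noteq> t"
    using r ora uC tC unfolding tri_def by auto
  have "r = w" using Nu[OF e1(1)] e1(2,3) nty by auto
  then have h1: "u = p \<or> u = q" "t = p \<or> t = q" using Nw e1 by (auto simp: insert_commute)
  have e2: "{u,r'} \<in> induced_edges E C" "{y,r'} \<in> induced_edges E C" "r' \<noteq> y"
    using r' ora uC tC unfolding tri_def by auto
  have "r' = w" using Nu[OF e2(1)] e2(2,3) nty by auto
  then have h2: "y = p \<or> y = q" using Nw e2 by (auto simp: insert_commute)
  show False using h1 h2 d pq by auto
qed

lemma caseABA:
  assumes T: "tri E t1 t2 t3"
    and u: "u \<notin> {t1,t2,t3}" and p1q1: "p1 \<in> {t1,t2,t3}" "q1 \<in> {t1,t2,t3}" "p1 \<noteq> q1" "{u,p1} \<in> E" "{u,q1} \<in> E"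
    and x: "x \<in> insert u {t1,t2,t3}" and yz: "y \<notin> insert u {t1,t2,t3}" "z \<notin> insert u {t1,t2,t3}" "tri E x y z"
    and CC: "C = insert w (insert y (insert z (insert u {t1,t2,t3})))"
    and w: "w \<notin> insert y (insert z (insert u {t1,t2,t3}))"
    and pq: "p \<in> insert y (insert z (insert u {t1,t2,t3}))" "q \<in> insert y (insert z (insert u {t1,t2,t3}))"
      "p \<noteq> q" "{w,p} \<in> E" "{w,q} \<in> E"
  shows "isomorphic C (induced_edges E C) DD_V DD_E"
proof -
  obtain r1 where r1: "{t1,t2,t3} = {p1,q1,r1}" "tri E p1 q1 r1" using tri_relabel[OF T p1q1(1-3)] by blast
  let ?T = "{p1,q1,r1}"
  let ?S1 = "insert u ?T"
  let ?S = "insert y (insert z ?S1)"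
  have d0: "p1 \<noteq> q1" "p1 \<noteq> r1" "q1 \<noteq> r1" using r1(2) unfolding tri_def by auto
  have dyz: "x \<noteq> y" "x \<noteq> z" "y \<noteq> z" using yz(3) unfolding tri_def by auto
  have u': "u \<notin> ?T" and x': "x \<in> ?S1" and yz': "y \<notin> ?S1" "z \<notin> ?S1" and w': "w \<notin> ?S"
    and CC': "C = insert w ?S" using u w CC r1(1) x yz by auto
  have pq': "p \<in> ?S" "q \<in> ?S" using pq r1(1) by auto
  have e0: "induced_edges E ?T = {{p1,q1},{p1,r1},{q1,r1}}" using IE_tri[OF G r1(2)] by simp
  have c0: "card (induced_edges E ?T) = 3" using IE_tri[OF G r1(2)] by simp
  have fT: "finite ?T" by simp
  have fS1: "finite ?S1" by simp
  have fS: "finite ?S" by simp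
  note A1 = IE_A[OF fT u' _ _ p1q1(3-5)]
  note B1 = IE_B[OF fS1 x' yz'(1,2) yz(3)]
  note A2 = IE_A[OF fS w' pq'(1,2) pq(3-5)]
  have cC: "card C = 7" using CC' d0 u' w' yz' dyz by simp
  then have "7 * card (induced_edges E C) \<le> 10 * card C" using Sp[OF CV] by simp
  then have eC: "card (induced_edges E C) \<le> 10" using cC by simp
  have IS1: "induced_edges E ?S1 = induced_edges E ?T \<union> {{u,p1},{u,q1}}"
    by (rule exact_sub[OF IE_fin[OF fS1] A1(1)]) (use A1(2) c0 B1(3) A2(3) eC CC' in simp_all)
  have IS: "induced_edges E ?S = induced_edges E ?S1 \<union> {{x,y},{x,z},{y,z}}"
    by (rule exact_sub[OF IE_fin[OF fS] B1(1)]) (use A1(2) c0 B1(2) A2(3) eC CC' IS1 in simp_all)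
  have IC: "induced_edges E C = induced_edges E ?S \<union> {{w,p},{w,q}}"
    unfolding CC' by (rule exact_sub[OF IE_fin A2(1)]) (use A1(2) c0 B1(2) A2(2) IS IS1 eC CC' fS in simp_all)
  have IC': "induced_edges E C = {{p1,q1},{p1,r1},{q1,r1},{u,p1},{u,q1},{x,y},{x,z},{y,z},{w,p},{w,q}}"
    using IC IS IS1 e0 by (simp add: insert_commute)
  have dd: "distinct [p1,q1,r1,u,y,z,w]" using d0 u' w' yz' dyz by auto
  have CC2: "C = {p1,q1,r1,u,y,z,w}" using CC' by auto
  have pqS: "p \<in> {p1,q1,r1,u,y,z}" "q \<in> {p1,q1,r1,u,y,z}" using pq' by auto
  consider "x = p1" | "x = q1" | "x = r1" | "x = u" using x' by auto
  then show ?thesis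
  proof cases
    case 1
    have i: "induced_edges E C = {{p1,q1},{p1,r1},{q1,r1},{p1,u},{q1,u},{p1,y},{p1,z},{y,z},{w,p},{w,q}}"
      using IC' 1 by (simp add: insert_commute)
    show ?thesis by (rule coreD[OF _ _ i]) (use dd pqS pq(3) in \<open>auto simp: CC2 insert_commute\<close>)
  next
    case 2
    have i: "induced_edges E C = {{q1,p1},{q1,r1},{p1,r1},{q1,u},{p1,u},{q1,y},{q1,z},{y,z},{w,p},{w,q}}"
      using IC' 2 by (simp add: insert_commute)
    show ?thesis by (rule coreD[OF _ _ i]) (use dd pqS pq(3) in \<open>auto simp: CC2 insert_commute\<close>)
  next
    case 3
    have i: "induced_edges E C = {{p1,q1},{p1,r1},{q1,r1},{p1,u},{q1,u},{r1,y},{r1,z},{y,z},{w,p},{w,q}}"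
      using IC' 3 by (simp add: insert_commute)
    show ?thesis by (rule FalseE, rule coreF[OF _ _ i]) (use dd pqS pq(3) in \<open>auto simp: CC2 insert_commute\<close>)
  next
    case 4
    have i: "induced_edges E C = {{p1,q1},{p1,u},{q1,u},{p1,r1},{q1,r1},{u,y},{u,z},{y,z},{w,p},{w,q}}"
      using IC' 4 by (simp add: insert_commute)
    show ?thesis by (rule FalseE, rule coreF[OF _ _ i]) (use dd pqS pq(3) in \<open>auto simp: CC2 insert_commute\<close>)
  qed
qed

lemma caseBAA:
  assumes T: "tri E t1 t2 t3"
    and x: "x \<in> {t1,t2,t3}" and yz: "y \<notin> {t1,t2,t3}" "z \<notin> {t1,t2,t3}" "tri E x y z"
    and u: "u \<notin> insert y (insert z {t1,t2,t3})"
    and p1q1: "p1 \<in> insert y (insert z {t1,t2,t3})" "q1 \<in> insert y (insert z {t1,t2,t3})" "p1 \<noteq> q1" "{u,p1} \<in> E" "{u,q1} \<in> E"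
    and CC: "C = insert w (insert u (insert y (insert z {t1,t2,t3})))"
    and w: "w \<notin> insert u (insert y (insert z {t1,t2,t3}))"
    and pq: "p \<in> insert u (insert y (insert z {t1,t2,t3}))" "q \<in> insert u (insert y (insert z {t1,t2,t3}))"
      "p \<noteq> q" "{w,p} \<in> E" "{w,q} \<in> E"
  shows "isomorphic C (induced_edges E C) DD_V DD_E"
proof -
  obtain t t' where r1: "{t1,t2,t3} = {x,t,t'}" "tri E x t t'" using tri_relabel1[OF T x] by blast
  let ?T = "{x,t,t'}"
  let ?S1 = "insert y (insert z ?T)"
  let ?S = "insert u ?S1"
  have d0: "x \<noteq> t" "x \<noteq> t'" "t \<noteq> t'" using r1(2) unfolding tri_def by auto
  have dyz: "x \<noteq> y" "x \<noteq> z" "y \<noteq> z" using yz(3) unfolding tri_def by auto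
  have x': "x \<in> ?T" and yz': "y \<notin> ?T" "z \<notin> ?T" and u': "u \<notin> ?S1" and w': "w \<notin> ?S"
    and CC': "C = insert w ?S" using u w CC r1(1) x yz by auto
  have pq': "p \<in> ?S" "q \<in> ?S" using pq r1(1) by auto
  have p1q1': "p1 \<in> ?S1" "q1 \<in> ?S1" using p1q1 r1(1) by auto
  have e0: "induced_edges E ?T = {{x,t},{x,t'},{t,t'}}" using IE_tri[OF G r1(2)] by simp
  have c0: "card (induced_edges E ?T) = 3" using IE_tri[OF G r1(2)] by simp
  have fT: "finite ?T" by simp
  have fS1: "finite ?S1" by simp
  have fS: "finite ?S" by simp
  note B1 = IE_B[OF fT x' yz'(1,2) yz(3)]
  note A1 = IE_A[OF fS1 u' p1q1'(1,2) p1q1(3-5)]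
  note A2 = IE_A[OF fS w' pq'(1,2) pq(3-5)]
  have cC: "card C = 7" using CC' d0 u' w' yz' dyz by simp
  then have "7 * card (induced_edges E C) \<le> 10 * card C" using Sp[OF CV] by simp
  then have eC: "card (induced_edges E C) \<le> 10" using cC by simp
  have IS1: "induced_edges E ?S1 = induced_edges E ?T \<union> {{x,y},{x,z},{y,z}}"
    by (rule exact_sub[OF IE_fin[OF fS1] B1(1)]) (use B1(2) c0 A1(3) A2(3) eC CC' in simp_all)
  have IS: "induced_edges E ?S = induced_edges E ?S1 \<union> {{u,p1},{u,q1}}"
    by (rule exact_sub[OF IE_fin[OF fS] A1(1)]) (use A1(2) c0 B1(2) A2(3) eC CC' IS1 in simp_all)
  have IC: "induced_edges E C = induced_edges E ?S \<union> {{w,p},{w,q}}"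
    unfolding CC' by (rule exact_sub[OF IE_fin A2(1)]) (use A1(2) c0 B1(2) A2(2) IS IS1 eC CC' fS in simp_all)
  have IC': "induced_edges E C = {{x,t},{x,t'},{t,t'},{x,y},{x,z},{y,z},{u,p1},{u,q1},{w,p},{w,q}}"
    using IC IS IS1 e0 by (simp add: insert_commute)
  have dd: "distinct [x,t,t',y,z,u,w]" using d0 u' w' yz' dyz by auto
  have CC2: "C = {x,t,t',y,z,u,w}" using CC' by auto
  have pqS: "p \<in> {x,t,t',y,z,u}" "q \<in> {x,t,t',y,z,u}" using pq' by auto
  have "p1 \<in> {x,t,t',y,z}" "q1 \<in> {x,t,t',y,z}" using p1q1' by auto
  then consider "{p1,q1} = {x,t}" | "{p1,q1} = {x,t'}" | "{p1,q1} = {x,y}" | "{p1,q1} = {x,z}" | "{p1,q1} = {t,t'}" | "{p1,q1} = {y,z}" | "{p1,q1} = {t,y}" | "{p1,q1} = {t,z}" | "{p1,q1} = {t',y}" | "{p1,q1} = {t',z}"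
    using p1q1(3) by (auto simp: doubleton_eq_iff insert_commute)
  then show ?thesis
  proof cases
    case 1
    have i: "induced_edges E C = {{x,t},{x,t'},{t,t'},{x,u},{t,u},{x,y},{x,z},{y,z},{w,p},{w,q}}"
      using pair_cases[OF 1] IC' by (elim disjE conjE) (simp_all add: insert_commute)
    show ?thesis by (rule coreD[OF _ _ i]) (use dd pqS pq(3) in \<open>auto simp: CC2 insert_commute\<close>)
  next
    case 2
    have i: "induced_edges E C = {{x,t'},{x,t},{t',t},{x,u},{t',u},{x,y},{x,z},{y,z},{w,p},{w,q}}"
      using pair_cases[OF 2] IC' by (elim disjE conjE) (simp_all add: insert_commute)
    show ?thesis by (rule coreD[OF _ _ i]) (use dd pqS pq(3) in \<open>auto simp: CC2 insert_commute\<close>)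
  next
    case 3
    have i: "induced_edges E C = {{x,y},{x,z},{y,z},{x,u},{y,u},{x,t},{x,t'},{t,t'},{w,p},{w,q}}"
      using pair_cases[OF 3] IC' by (elim disjE conjE) (simp_all add: insert_commute)
    show ?thesis by (rule coreD[OF _ _ i]) (use dd pqS pq(3) in \<open>auto simp: CC2 insert_commute\<close>)
  next
    case 4
    have i: "induced_edges E C = {{x,z},{x,y},{z,y},{x,u},{z,u},{x,t},{x,t'},{t,t'},{w,p},{w,q}}"
      using pair_cases[OF 4] IC' by (elim disjE conjE) (simp_all add: insert_commute)
    show ?thesis by (rule coreD[OF _ _ i]) (use dd pqS pq(3) in \<open>auto simp: CC2 insert_commute\<close>)
  next
    case 5
    have i: "induced_edges E C = {{t,t'},{t,x},{t',x},{t,u},{t',u},{x,y},{x,z},{y,z},{w,p},{w,q}}"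
      using pair_cases[OF 5] IC' by (elim disjE conjE) (simp_all add: insert_commute)
    show ?thesis by (rule FalseE, rule coreF[OF _ _ i]) (use dd pqS pq(3) in \<open>auto simp: CC2 insert_commute\<close>)
  next
    case 6
    have i: "induced_edges E C = {{y,z},{y,x},{z,x},{y,u},{z,u},{x,t},{x,t'},{t,t'},{w,p},{w,q}}"
      using pair_cases[OF 6] IC' by (elim disjE conjE) (simp_all add: insert_commute)
    show ?thesis by (rule FalseE, rule coreF[OF _ _ i]) (use dd pqS pq(3) in \<open>auto simp: CC2 insert_commute\<close>)
  next
    case 7
    have i: "induced_edges E C = {{x,t},{x,t'},{t,t'},{x,y},{x,z},{y,z},{u,t},{u,y},{w,p},{w,q}}"
      using pair_cases[OF 7] IC' by (elim disjE conjE) (simp_all add: insert_commute)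
    show ?thesis by (rule FalseE, rule coreN[OF _ _ i]) (use dd pqS pq(3) in \<open>auto simp: CC2 insert_commute\<close>)
  next
    case 8
    have i: "induced_edges E C = {{x,t},{x,t'},{t,t'},{x,z},{x,y},{z,y},{u,t},{u,z},{w,p},{w,q}}"
      using pair_cases[OF 8] IC' by (elim disjE conjE) (simp_all add: insert_commute)
    show ?thesis by (rule FalseE, rule coreN[OF _ _ i]) (use dd pqS pq(3) in \<open>auto simp: CC2 insert_commute\<close>)
  next
    case 9
    have i: "induced_edges E C = {{x,t'},{x,t},{t',t},{x,y},{x,z},{y,z},{u,t'},{u,y},{w,p},{w,q}}"
      using pair_cases[OF 9] IC' by (elim disjE conjE) (simp_all add: insert_commute)
    show ?thesis by (rule FalseE, rule coreN[OF _ _ i]) (use dd pqS pq(3) in \<open>auto simp: CC2 insert_commute\<close>)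
  next
    case 10
    have i: "induced_edges E C = {{x,t'},{x,t},{t',t},{x,z},{x,y},{z,y},{u,t'},{u,z},{w,p},{w,q}}"
      using pair_cases[OF 10] IC' by (elim disjE conjE) (simp_all add: insert_commute)
    show ?thesis by (rule FalseE, rule coreN[OF _ _ i]) (use dd pqS pq(3) in \<open>auto simp: CC2 insert_commute\<close>)
  qed
qed

end

context setting begin

lemma a2_case:
  assumes bS: "built E C S (Suc 0) b" and CC: "C = insert w S" and w: "w \<notin> S"
    and pq: "p \<in> S" "q \<in> S" "p \<noteq> q" "{w,p} \<in> E" "{w,q} \<in> E"
  shows "isomorphic C (induced_edges E C) TT_V TT_E \<or> isomorphic C (induced_edges E C) DD_V DD_E"
proof -
  have wC: "w \<in> C" using CC by simp
  have "built E C C (Suc (Suc 0)) b" using built.stA[OF bS wC w pq] CC by simp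
  then have b1: "b \<le> 1" using bound by fastforce
  from bS show ?thesis
  proof (cases rule: built.cases)
    case (stA S1 u p1 q1)
    show ?thesis
    proof (cases "b = 0")
      case True
      then obtain t1 t2 t3 where T: "S1 = {t1,t2,t3}" "tri E t1 t2 t3"
        using built00 stA(2) by blast
      have SS: "S = insert u {t1,t2,t3}" using stA(1) T(1) by simp
      have "isomorphic C (induced_edges E C) TT_V TT_E"
      proof (rule caseAA[OF T(2), of u p1 q1 w p q])
        show "u \<notin> {t1,t2,t3}" "p1 \<in> {t1,t2,t3}" "q1 \<in> {t1,t2,t3}" using stA(4-6) T(1) by simp_all
        show "p1 \<noteq> q1" "{u,p1} \<in> E" "{u,q1} \<in> E" using stA(7-9) by simp_all
        show "C = insert w (insert u {t1,t2,t3})" "w \<notin> insert u {t1,t2,t3}"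
          "p \<in> insert u {t1,t2,t3}" "q \<in> insert u {t1,t2,t3}" using CC w pq(1,2) SS by simp_all
      qed (use pq in simp_all)
      then show ?thesis by blast
    next
      case False
      then have "b = Suc 0" using b1 by simp
      then have bS1: "built E C S1 0 (Suc 0)" using stA(2) by simp
      from bS1 show ?thesis
      proof (cases rule: built.cases)
        case (stB S0 x y z)
        obtain t1 t2 t3 where T: "S0 = {t1,t2,t3}" "tri E t1 t2 t3" using built00 stB(2) by blast
        have S1: "S1 = insert y (insert z {t1,t2,t3})" using stB(1) T(1) by simp
        have SS: "S = insert u (insert y (insert z {t1,t2,t3}))" using stA(1) S1 by simp
        have "isomorphic C (induced_edges E C) DD_V DD_E"
        proof (rule caseBAA[OF T(2), of x y z u p1 q1 w p q])
          show "x \<in> {t1,t2,t3}" "y \<notin> {t1,t2,t3}" "z \<notin> {t1,t2,t3}" using stB(4,7,8) T(1) by simp_all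
          show "tri E x y z" using stB(9) by simp
          show "u \<notin> insert y (insert z {t1,t2,t3})" "p1 \<in> insert y (insert z {t1,t2,t3})"
            "q1 \<in> insert y (insert z {t1,t2,t3})" using stA(4-6) S1 by simp_all
          show "p1 \<noteq> q1" "{u,p1} \<in> E" "{u,q1} \<in> E" using stA(7-9) by simp_all
          show "C = insert w (insert u (insert y (insert z {t1,t2,t3})))"
            "w \<notin> insert u (insert y (insert z {t1,t2,t3}))"
            "p \<in> insert u (insert y (insert z {t1,t2,t3}))" "q \<in> insert u (insert y (insert z {t1,t2,t3}))"
            using CC w pq(1,2) SS by simp_all
        qed (use pq in simp_all)
        then show ?thesis by blast
      qed
    qed
  next
    case (stB S1 b1' x y z)
    have bS1: "built E C S1 (Suc 0) 0" using stB(2,3) b1 by simp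
    from bS1 show ?thesis
    proof (cases rule: built.cases)
      case (stA S0 u p1 q1)
      obtain t1 t2 t3 where T: "S0 = {t1,t2,t3}" "tri E t1 t2 t3" using built00 stA(2) by blast
      have S1: "S1 = insert u {t1,t2,t3}" using stA(1) T(1) by simp
      have SS: "S = insert y (insert z (insert u {t1,t2,t3}))" using stB(1) S1 by simp
      have "isomorphic C (induced_edges E C) DD_V DD_E"
      proof (rule caseABA[OF T(2), of u p1 q1 x y z w p q])
        show "u \<notin> {t1,t2,t3}" "p1 \<in> {t1,t2,t3}" "q1 \<in> {t1,t2,t3}" using stA(4-6) T(1) by simp_all
        show "p1 \<noteq> q1" "{u,p1} \<in> E" "{u,q1} \<in> E" using stA(7-9) by simp_all
        show "x \<in> insert u {t1,t2,t3}" "y \<notin> insert u {t1,t2,t3}" "z \<notin> insert u {t1,t2,t3}"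
          using stB(5,8,9) S1 by simp_all
        show "tri E x y z" using stB(10) by simp
        show "C = insert w (insert y (insert z (insert u {t1,t2,t3})))"
          "w \<notin> insert y (insert z (insert u {t1,t2,t3}))"
          "p \<in> insert y (insert z (insert u {t1,t2,t3}))" "q \<in> insert y (insert z (insert u {t1,t2,t3}))"
          using CC w pq(1,2) SS by simp_all
      qed (use pq in simp_all)
      then show ?thesis by blast
    qed
  qed
qed

lemma main_comp:
  "isomorphic C (induced_edges E C) TT_V TT_E \<or> isomorphic C (induced_edges E C) DD_V DD_E"
proof -
  obtain a b where bC: "built E C C a b" using exists_built by blast
  from bC show ?thesis
  proof (cases rule: built.cases)
    case (base t1 t2 t3)
    then have "card C \<le> 3" by (simp add: card_insert_le_m1 card_insert_if)
    then show ?thesis using c5 by simp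
  next
    case (stA S a' w p q)
    show ?thesis
    proof (cases a')
      case 0
      then show ?thesis using a1_false[of S b w p q] stA(1,3,5-10) by simp
    next
      case (Suc a'')
      show ?thesis
      proof (cases a'')
        case 0
        then show ?thesis using a2_case[of S b w p q] stA(1,3,5-10) Suc by simp
      next
        case (Suc k)
        then show ?thesis using bound[OF bC] stA(2) \<open>a' = Suc a''\<close> by simp
      qed
    qed
  next
    case (stB S b' x y z)
    then show ?thesis using lastB_false[OF stB(3) stB(4) stB(5-10) stB(1)] by simp
  qed
qed

end

theorem mainTheorem19:
  fixes V :: "'a set" and E :: "'a set set"
  assumes "graph V E"
    and "K3_1_stable V E"
    and "\<forall>(FV :: nat set) (FE :: nat set set).
           graph FV FE \<and> card FV < 25 \<and> real (card FE) / real (card FV) > (10::real) / 7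
           \<longrightarrow> \<not> contains_subgraph FV FE V E"
  shows "\<forall>C \<in> components V E.
           isomorphic C (induced_edges E C) TT_V TT_E \<or>
           isomorphic C (induced_edges E C) DD_V DD_E"
proof
  fix C assume C: "C \<in> components V E"
  interpret setting V E C
  proof
    show "graph V E" "K3_1_stable V E" "C \<in> components V E" using assms C by auto
    show "\<And>S. S \<subseteq> V \<Longrightarrow> card S < 25 \<Longrightarrow> 7 * card (induced_edges E S) \<le> 10 * card S"
      using sparse[OF assms(1,3)] by blast
  qed
  show "isomorphic C (induced_edges E C) TT_V TT_E \<or> isomorphic C (induced_edges E C) DD_V DD_E"
    by (rule main_comp)
qed


end
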